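(* Let $X$ be a compact metric space and $f\colon X\to X$ a continuous map. Suppose there is $x\in X$ such that $\omega_f(x)$ is infinite, contains a periodic point of $f$, and contains a point which is isolated in $\omega_f(x)$ (with its relative topology). Then there exist $\delta>0$ and an infinite $\delta$-scrambled set for $f$.
   Context: $\omega_f(x)$ denotes the $\omega$-limit set of $x$, i.e. the set of limit points of the sequence $(f^n(x))_{n\ge0}$. For $\delta>0$, a pair $(u,v)$ of points is $\delta$-scrambled if $\liminf_{n\to\infty}d(f^n(u),f^n(v))=0$ and $\limsup_{n\to\infty}d(f^n(u),f^n(v))\ge\delta$; a set is $\delta$-scrambled if every pair of its distinct points is $\delta$-scrambled. *)

theory Defs
  imports "HOL-Analysis.Analysis" "HOL-Library.Liminf_Limsup"
begin

definition omega_limit :: "('a::metric_space \<Rightarrow> 'a) \<Rightarrow> 'a \<Rightarrow> 'a set" where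
  "omega_limit f x = {y. \<exists>r. strict_mono r \<and> ((\<lambda>k. (f ^^ (r k)) x) \<longlonglongrightarrow> y)}"

definition periodic_point :: "('a \<Rightarrow> 'a) \<Rightarrow> 'a \<Rightarrow> bool" where
  "periodic_point f p \<longleftrightarrow> (\<exists>n>0. (f ^^ n) p = p)"

definition scrambled_pair :: "('a::metric_space \<Rightarrow> 'a) \<Rightarrow> real \<Rightarrow> 'a \<Rightarrow> 'a \<Rightarrow> bool" where
  "scrambled_pair f \<delta> u v \<longleftrightarrow>
     liminf (\<lambda>n. ereal (dist ((f ^^ n) u) ((f ^^ n) v))) = 0 \<and>
     limsup (\<lambda>n. ereal (dist ((f ^^ n) u) ((f ^^ n) v))) \<ge> ereal \<delta>"

definition scrambled_set :: "('a::metric_space \<Rightarrow> 'a) \<Rightarrow> real \<Rightarrow> 'a set \<Rightarrow> bool" where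
  "scrambled_set f \<delta> S \<longleftrightarrow> (\<forall>u\<in>S. \<forall>v\<in>S. u \<noteq> v \<longrightarrow> scrambled_pair f \<delta> u v)"

end

theory Submission
  imports Defs
begin

lemma funpow_in: "f ` X \<subseteq> X \<Longrightarrow> x \<in> X \<Longrightarrow> (f^^n) x \<in> X"
  by (induct n) auto

lemma cont_funpow:
  assumes "continuous_on X f" "f ` X \<subseteq> X"
  shows "continuous_on X (f^^n)"
proof (induct n)
  case 0 then show ?case by (simp add: continuous_on_id)
next
  case (Suc n)
  have "continuous_on X (f \<circ> (f^^n))"
    apply (rule continuous_on_compose[OF Suc])
    apply (rule continuous_on_subset[OF assms(1)])
    using assms(2) funpow_in[OF assms(2)] by auto
  then show ?case by simp
qed

lemma omega_sub:
  assumes "closed X" "f ` X \<subseteq> X" "x \<in> X"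
  shows "omega_limit f x \<subseteq> X"
proof
  fix z assume "z \<in> omega_limit f x"
  then obtain r where "(\<lambda>k. (f ^^ (r k)) x) \<longlonglongrightarrow> z" unfolding omega_limit_def by auto
  then show "z \<in> X" using closed_sequentially[OF assms(1), of "\<lambda>k. (f^^(r k)) x"] funpow_in[OF assms(2,3)] by blast
qed

lemma tend_iter:
  assumes "continuous_on X f" "f ` X \<subseteq> X" "x \<in> X" "closed X"
    and "(\<lambda>k. (f^^(r k)) x) \<longlonglongrightarrow> z"
  shows "(\<lambda>k. (f^^(j + r k)) x) \<longlonglongrightarrow> (f^^j) z"
proof -
  have zX: "z \<in> X" using closed_sequentially[OF assms(4), of "\<lambda>k. (f^^(r k)) x"] funpow_in[OF assms(2,3)] assms(5) by blast
  have "(\<lambda>k. (f^^j) ((f^^(r k)) x)) \<longlonglongrightarrow> (f^^j) z"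
    by (rule continuous_on_tendsto_compose[OF cont_funpow[OF assms(1,2)] assms(5) zX])
       (simp add: funpow_in[OF assms(2,3)])
  then show ?thesis by (simp add: funpow_add)
qed

lemma omega_from_compact:
  fixes f :: "'a::metric_space \<Rightarrow> 'a"
  assumes "compact K" "infinite {n. (f^^n) x \<in> K}"
  shows "\<exists>z\<in>K. z \<in> omega_limit f x"
proof -
  obtain s :: "nat \<Rightarrow> nat" where s: "strict_mono s" "\<forall>n. s n \<in> {n. (f^^n) x \<in> K}"
    using infinite_enumerate[OF assms(2)] by blast
  have "seq_compact K" using assms(1) compact_imp_seq_compact by auto
  then obtain l r where "l \<in> K" "strict_mono r" "((\<lambda>n. (f^^(s n)) x) \<circ> r) \<longlonglongrightarrow> l"
    unfolding seq_compact_def using s(2) by force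
  then show ?thesis unfolding omega_limit_def
    using strict_mono_o[OF s(1)] by (auto simp: o_def intro!: bexI[of _ l] exI[of _ "s \<circ> r"])
qed

lemma finite_min_eps:
  fixes q :: nat
  shows "(\<forall>i<q. \<exists>\<epsilon>>0. \<forall>w. dist w y < \<epsilon> \<longrightarrow> P i w) \<Longrightarrow> \<exists>\<epsilon>>0. \<forall>i<q. \<forall>w. dist w y < \<epsilon> \<longrightarrow> P i w"
proof (induct q)
  case 0 then show ?case by (auto intro: exI[of _ 1])
next
  case (Suc q)
  then obtain e1 where e1: "e1 > 0" "\<forall>i<q. \<forall>w. dist w y < e1 \<longrightarrow> P i w" by auto
  obtain e2 where e2: "e2 > 0" "\<forall>w. dist w y < e2 \<longrightarrow> P q w" using Suc(2) by auto
  show ?case using e1 e2 by (intro exI[of _ "min e1 e2"]) (auto simp: less_Suc_eq)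
qed

lemma periodic_iter: "(f^^m) p = p \<Longrightarrow> (f^^(a*m)) p = p"
  by (induct a) (simp_all add: funpow_add)


lemma iso_periodic_finite:
  fixes f :: "'a::metric_space \<Rightarrow> 'a"
  assumes X: "compact X" "continuous_on X f" "f ` X \<subseteq> X" "x \<in> X"
    and y: "y \<in> omega_limit f x" "e > 0" "ball y e \<inter> omega_limit f x = {y}"
    and q: "q > 0" "(f^^q) y = y"
  shows "finite (omega_limit f x)"
proof -
  have cl: "closed X" using X(1) compact_imp_closed by auto
  have yX: "y \<in> X" using omega_sub[OF cl X(3,4)] y(1) by auto
  define \<rho> where "\<rho> = e/2"
  have \<rho>: "\<rho> > 0" "\<rho> < e" using y(2) unfolding \<rho>_def by auto
  have near: "\<exists>N. \<forall>n\<ge>N. dist ((f^^n) x) y \<le> \<rho> \<longrightarrow> dist ((f^^n) x) y < \<eta>" if "\<eta> > 0" for \<eta>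
  proof (rule ccontr)
    assume "\<not> ?thesis"
    then have A: "\<forall>m. \<exists>n\<ge>m. dist ((f^^n) x) y \<le> \<rho> \<and> \<not> dist ((f^^n) x) y < \<eta>"
      by blast
    have "\<forall>m. \<exists>n\<ge>m. n \<in> {n. (f^^n) x \<in> X \<inter> cball y \<rho> - ball y \<eta>}"
    proof
      fix m
      obtain n where "n \<ge> m" "dist ((f^^n) x) y \<le> \<rho>" "\<not> dist ((f^^n) x) y < \<eta>"
        using A by blast
      moreover have "(f^^n) x \<in> X" using funpow_in[OF X(3,4)] .
      ultimately show "\<exists>n\<ge>m. n \<in> {n. (f^^n) x \<in> X \<inter> cball y \<rho> - ball y \<eta>}"
        by (intro exI[of _ n]) (simp add: dist_commute)
    qed
    then have "infinite {n. (f^^n) x \<in> X \<inter> cball y \<rho> - ball y \<eta>}"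
      unfolding infinite_nat_iff_unbounded_le .
    moreover have "compact (X \<inter> cball y \<rho> - ball y \<eta>)"
      by (intro compact_diff compact_Int_closed X(1)) auto
    ultimately obtain z where z: "z \<in> X \<inter> cball y \<rho> - ball y \<eta>" "z \<in> omega_limit f x"
      using omega_from_compact by blast
    then have "z \<in> ball y e \<inter> omega_limit f x" using \<rho> by auto
    then have "z = y" using y(3) by auto
    then show False using z(1) that by auto
  qed
  have hc: "continuous_on X (f^^q)" using cont_funpow[OF X(2,3)] .
  have stay: "\<exists>n0. \<forall>k. dist ((f^^(n0 + k*q)) x) y < \<epsilon>" if "\<epsilon> > 0" for \<epsilon>
  proof -
    have mp: "min \<epsilon> \<rho> > 0" using \<rho>(1) that by auto
    obtain \<eta> where \<eta>: "\<eta> > 0" "\<forall>z\<in>X. dist z y < \<eta> \<longrightarrow> dist ((f^^q) z) ((f^^q) y) < min \<epsilon> \<rho>"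
      using hc yX mp unfolding continuous_on_iff by blast
    define \<eta>' where "\<eta>' = min \<eta> \<epsilon>"
    have \<eta>': "\<eta>' > 0" "\<eta>' \<le> \<epsilon>" "\<eta>' \<le> \<eta>" using \<eta>(1) that unfolding \<eta>'_def by auto
    obtain N where N: "\<forall>n\<ge>N. dist ((f^^n) x) y \<le> \<rho> \<longrightarrow> dist ((f^^n) x) y < \<eta>'"
      using near[OF \<eta>'(1)] by auto
    obtain r where r: "strict_mono r" "(\<lambda>k. (f ^^ (r k)) x) \<longlonglongrightarrow> y"
      using y(1) unfolding omega_limit_def by auto
    obtain K where K: "\<forall>k\<ge>K. dist ((f ^^ (r k)) x) y < \<eta>'"
      using r(2) \<eta>'(1) unfolding tendsto_iff eventually_sequentially by blast
    define n where "n = r (max K N)"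
    have n: "n \<ge> N" "dist ((f^^n) x) y < \<eta>'"
      using K seq_suble[OF r(1), of "max K N"] unfolding n_def by auto
    have ind: "dist ((f^^(n + k*q)) x) y < \<eta>'" for k
    proof (induct k)
      case 0 then show ?case using n by simp
    next
      case (Suc k)
      define z where "z = (f^^(n + k*q)) x"
      have zX: "z \<in> X" unfolding z_def using funpow_in[OF X(3,4)] .
      have eq: "(f^^(n + Suc k*q)) x = (f^^q) z"
      proof -
        have "n + Suc k*q = q + (n + k*q)" by simp
        then show ?thesis unfolding z_def by (simp only: funpow_add o_apply)
      qed
      have "dist z y < \<eta>" using Suc \<eta>'(3) unfolding z_def by linarith
      then have "dist ((f^^q) z) ((f^^q) y) < min \<epsilon> \<rho>" using \<eta>(2) zX by blast
      then have dq: "dist ((f^^q) z) y < \<rho>" using q(2) by simp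
      have "n + Suc k*q \<ge> N" using n(1) by simp
      then have "dist ((f^^(n + Suc k*q)) x) y \<le> \<rho> \<longrightarrow> dist ((f^^(n + Suc k*q)) x) y < \<eta>'"
        using N by blast
      then show ?case using dq eq by simp
    qed
    show ?thesis using ind \<eta>'(2) by (intro exI[of _ n]) (auto intro: less_le_trans)
  qed
  have "omega_limit f x \<subseteq> (\<lambda>i. (f^^i) y) ` {..<q}"
  proof
    fix z assume z: "z \<in> omega_limit f x"
    obtain r where r: "strict_mono r" "(\<lambda>k. (f ^^ (r k)) x) \<longlonglongrightarrow> z"
      using z unfolding omega_limit_def by auto
    show "z \<in> (\<lambda>i. (f^^i) y) ` {..<q}"
    proof (rule ccontr)
      assume nz: "z \<notin> (\<lambda>i. (f^^i) y) ` {..<q}"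
      then have pos: "\<forall>i<q. dist z ((f^^i) y) > 0" by auto
      have "\<forall>i<q. \<exists>\<epsilon>>0. \<forall>w. dist w y < \<epsilon> \<longrightarrow> (w \<in> X \<longrightarrow> dist ((f^^i) w) ((f^^i) y) < dist z ((f^^i) y)/2)"
      proof (intro allI impI)
        fix i assume "i < q"
        then have "dist z ((f^^i) y)/2 > 0" using pos by auto
        then show "\<exists>\<epsilon>>0. \<forall>w. dist w y < \<epsilon> \<longrightarrow> (w \<in> X \<longrightarrow> dist ((f^^i) w) ((f^^i) y) < dist z ((f^^i) y)/2)"
          using cont_funpow[OF X(2,3), of i] yX unfolding continuous_on_iff by blast
      qed
      from finite_min_eps[OF this] obtain \<epsilon> where \<epsilon>: "\<epsilon> > 0"
        "\<forall>i<q. \<forall>w. dist w y < \<epsilon> \<longrightarrow> (w \<in> X \<longrightarrow> dist ((f^^i) w) ((f^^i) y) < dist z ((f^^i) y)/2)"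
        by blast
      obtain n0 where n0: "\<forall>k. dist ((f^^(n0 + k*q)) x) y < \<epsilon>" using stay[OF \<epsilon>(1)] by auto
      have ev1: "eventually (\<lambda>k. \<forall>i\<in>{..<q}. dist ((f^^(r k)) x) z < dist z ((f^^i) y)/2) sequentially"
      proof (rule eventually_ball_finite)
        show "\<forall>i\<in>{..<q}. eventually (\<lambda>k. dist ((f^^(r k)) x) z < dist z ((f^^i) y)/2) sequentially"
        proof
          fix i assume "i \<in> {..<q}"
          then have "dist z ((f^^i) y)/2 > 0" using pos by auto
          then show "eventually (\<lambda>k. dist ((f^^(r k)) x) z < dist z ((f^^i) y)/2) sequentially"
            using r(2) unfolding tendsto_iff by blast
        qed
      qed simp
      have ev2: "eventually (\<lambda>k. r k \<ge> n0) sequentially"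
        unfolding eventually_sequentially using seq_suble[OF r(1)] le_trans by blast
      obtain k where k: "\<forall>i\<in>{..<q}. dist ((f^^(r k)) x) z < dist z ((f^^i) y)/2" "r k \<ge> n0"
        using eventually_happens'[OF _ eventually_conj[OF ev1 ev2]] by auto
      define t where "t = (r k - n0) div q"
      define i where "i = (r k - n0) mod q"
      have i: "i < q" unfolding i_def using q(1) by auto
      have rk: "r k = i + (n0 + t*q)" unfolding i_def t_def using k(2)
        by (metis add.commute add.left_commute le_add_diff_inverse mod_div_mult_eq)
      define w where "w = (f^^(n0 + t*q)) x"
      have wX: "w \<in> X" unfolding w_def using funpow_in[OF X(3,4)] .
      have fw: "(f^^(r k)) x = (f^^i) w" unfolding w_def rk by (simp add: funpow_add)
      have d1: "dist ((f^^i) w) ((f^^i) y) < dist z ((f^^i) y)/2"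
        using \<epsilon>(2) i wX n0 unfolding w_def by blast
      have d2: "dist ((f^^i) w) z < dist z ((f^^i) y)/2" using k(1) i fw by auto
      have "dist z ((f^^i) y) \<le> dist ((f^^i) w) z + dist ((f^^i) w) ((f^^i) y)"
        by (rule dist_triangle3)
      then show False using d1 d2 by linarith
    qed
  qed
  then show ?thesis by (rule finite_subset) auto
qed


lemma ev_per_finite:
  fixes f :: "'a::metric_space \<Rightarrow> 'a"
  assumes "(f^^c) x = (f^^d) x" "c < d"
  shows "finite (omega_limit f x)"
proof -
  define F where "F = (\<lambda>i. (f^^i) x) ` {..<d}"
  have inF: "(f^^n) x \<in> F" for n
  proof (induct n rule: less_induct)
    case (less n)
    show ?case
    proof (cases "n < d")
      case True then show ?thesis unfolding F_def by auto
    next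
      case False
      define n' where "n' = n - d + c"
      have n': "n' < n" using False assms(2) unfolding n'_def by auto
      have "(f^^n) x = (f^^(n-d)) ((f^^d) x)"
      proof -
        have "n = (n-d) + d" using False by simp
        then have "(f^^n) x = (f^^((n-d) + d)) x" by simp
        then show ?thesis by (simp only: funpow_add o_apply)
      qed
      also have "\<dots> = (f^^(n-d)) ((f^^c) x)" using assms(1) by simp
      also have "\<dots> = (f^^n') x" unfolding n'_def by (simp add: funpow_add)
      finally show ?thesis using less n' by simp
    qed
  qed
  have "omega_limit f x \<subseteq> F"
  proof
    fix z assume "z \<in> omega_limit f x"
    then obtain r where "(\<lambda>k. (f ^^ (r k)) x) \<longlonglongrightarrow> z" unfolding omega_limit_def by auto
    moreover have "closed F" unfolding F_def by (simp add: finite_imp_closed)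
    ultimately show "z \<in> F" using closed_sequentially[of F "\<lambda>k. (f ^^ (r k)) x"] inF by blast
  qed
  moreover have "finite F" unfolding F_def by simp
  ultimately show ?thesis using finite_subset by blast
qed

lemma shift_iter: "(f^^n) ((f^^c) x) = (f^^(c+n)) x"
  by (subst add.commute) (simp add: funpow_add)

lemma scr_pair:
  fixes f :: "'a::metric_space \<Rightarrow> 'a"
  assumes X: "compact X" "continuous_on X f" "f ` X \<subseteq> X" "x \<in> X"
    and inf: "infinite (omega_limit f x)"
    and p: "p \<in> omega_limit f x" "m > 0" "(f^^m) p = p"
    and y: "y \<in> omega_limit f x" "e > 0" "ball y e \<inter> omega_limit f x = {y}"
    and ab: "a < b"
  shows "scrambled_pair f (e/2) ((f^^(a*m)) x) ((f^^(b*m)) x)"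
proof -
  have cl: "closed X" using X(1) compact_imp_closed by auto
  define d where "d = (\<lambda>n. dist ((f^^(a*m + n)) x) ((f^^(b*m + n)) x))"
  have eqd: "(\<lambda>n. ereal (dist ((f ^^ n) ((f^^(a*m)) x)) ((f ^^ n) ((f^^(b*m)) x)))) = (\<lambda>n. ereal (d n))"
    unfolding d_def shift_iter ..
  obtain r where r: "strict_mono r" "(\<lambda>k. (f ^^ (r k)) x) \<longlonglongrightarrow> p"
    using p(1) unfolding omega_limit_def by auto
  have ta: "(\<lambda>k. (f^^(a*m + r k)) x) \<longlonglongrightarrow> p"
    using tend_iter[OF X(2,3,4) cl r(2), of "a*m"] periodic_iter[OF p(3)] by simp
  have tb: "(\<lambda>k. (f^^(b*m + r k)) x) \<longlonglongrightarrow> p"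
    using tend_iter[OF X(2,3,4) cl r(2), of "b*m"] periodic_iter[OF p(3)] by simp
  have "(\<lambda>k. d (r k)) \<longlonglongrightarrow> dist p p" unfolding d_def using tendsto_dist[OF ta tb] .
  then have "(\<lambda>k. ereal (d (r k))) \<longlonglongrightarrow> ereal 0" by simp
  then have L: "liminf (\<lambda>k. ereal (d (r k))) = ereal 0"
    by (rule lim_imp_Liminf[OF trivial_limit_sequentially])
  have "liminf (\<lambda>n. ereal (d n)) \<le> liminf ((\<lambda>n. ereal (d n)) \<circ> r)"
    by (rule liminf_subseq_mono[OF r(1)])
  then have l1: "liminf (\<lambda>n. ereal (d n)) \<le> 0" using L by (simp add: o_def zero_ereal_def)
  have l2: "0 \<le> liminf (\<lambda>n. ereal (d n))"
    by (rule Liminf_bounded) (simp add: d_def)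
  have liminf0: "liminf (\<lambda>n. ereal (d n)) = 0" using l1 l2 by simp
  have limsup: "limsup (\<lambda>n. ereal (d n)) \<ge> ereal (e/2)"
  proof (rule ccontr)
    assume "\<not> ?thesis"
    then have "limsup (\<lambda>n. ereal (d n)) < ereal (e/2)" by simp
    then have "eventually (\<lambda>n. ereal (d n) < ereal (e/2)) sequentially" by (rule Limsup_lessD)
    then obtain N where N: "\<forall>n\<ge>N. d n < e/2" unfolding eventually_sequentially by auto
    define j where "j = (b-a)*m"
    have j: "j > 0" "b*m = j + a*m" using ab p(2) unfolding j_def
      by (auto simp: diff_mult_distrib)
    obtain s where s: "strict_mono s" "(\<lambda>k. (f ^^ (s k)) x) \<longlonglongrightarrow> y"
      using y(1) unfolding omega_limit_def by auto
    have t2: "(\<lambda>k. (f^^(j + s k)) x) \<longlonglongrightarrow> (f^^j) y" using tend_iter[OF X(2,3,4) cl s(2)] .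
    have td: "(\<lambda>k. dist ((f^^(s k)) x) ((f^^(j + s k)) x)) \<longlonglongrightarrow> dist y ((f^^j) y)"
      using tendsto_dist[OF s(2) t2] .
    have "\<forall>k\<ge>N + a*m. dist ((f^^(s k)) x) ((f^^(j + s k)) x) \<le> e/2"
    proof (intro allI impI)
      fix k assume k: "k \<ge> N + a*m"
      then have sk: "s k \<ge> N + a*m" using seq_suble[OF s(1), of k] by linarith
      define n where "n = s k - a*m"
      have n: "n \<ge> N" "a*m + n = s k" "b*m + n = j + s k" using sk j(2) unfolding n_def by auto
      have "d n < e/2" using N n(1) by auto
      then show "dist ((f^^(s k)) x) ((f^^(j + s k)) x) \<le> e/2" unfolding d_def n(2,3) by simp
    qed
    then have dy: "dist y ((f^^j) y) \<le> e/2" using LIMSEQ_le_const2[OF td] by blast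
    have "(f^^j) y \<in> omega_limit f x" unfolding omega_limit_def
    proof (intro CollectI exI conjI)
      show "strict_mono (\<lambda>k. j + s k)" using s(1) unfolding strict_mono_def by auto
      show "(\<lambda>k. (f^^(j + s k)) x) \<longlonglongrightarrow> (f^^j) y" using t2 .
    qed
    moreover have "(f^^j) y \<in> ball y e" unfolding mem_ball using dy y(2) by linarith
    ultimately have "(f^^j) y \<in> ball y e \<inter> omega_limit f x" by (rule IntI[rotated])
    then have "(f^^j) y \<in> {y}" by (simp only: y(3))
    then have "(f^^j) y = y" by (rule singletonD)
    then have "finite (omega_limit f x)" by (rule iso_periodic_finite[OF X y j(1)])
    then show False using inf by (rule notE[rotated])
  qed
  show ?thesis unfolding scrambled_pair_def eqd using liminf0 limsup by simp
qed

lemma scr_sym: "scrambled_pair f \<delta> u v \<Longrightarrow> scrambled_pair f \<delta> v u"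
  unfolding scrambled_pair_def by (simp add: dist_commute)

theorem proposition1p5:
  fixes X :: "'a::metric_space set" and f :: "'a \<Rightarrow> 'a" and x :: 'a
  assumes "compact X"
    and "continuous_on X f"
    and "f ` X \<subseteq> X"
    and "x \<in> X"
    and "infinite (omega_limit f x)"
    and "\<exists>p\<in>omega_limit f x. periodic_point f p"
    and "\<exists>y\<in>omega_limit f x. \<exists>e>0. ball y e \<inter> omega_limit f x = {y}"
  shows "\<exists>\<delta>>0. \<exists>S. S \<subseteq> X \<and> infinite S \<and> scrambled_set f \<delta> S"
proof -
  obtain p m where p: "p \<in> omega_limit f x" "m > 0" "(f^^m) p = p"
    using assms(6) unfolding periodic_point_def by auto
  obtain y e where y: "y \<in> omega_limit f x" "e > 0" "ball y e \<inter> omega_limit f x = {y}"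
    using assms(7) by auto
  define S where "S = range (\<lambda>k. (f^^(k*m)) x)"
  have SX: "S \<subseteq> X" unfolding S_def using funpow_in[OF assms(3,4)] by auto
  have infS: "infinite S"
  proof
    assume "finite S"
    then have "\<not> inj (\<lambda>k. (f^^(k*m)) x)" unfolding S_def using finite_imageD[of "\<lambda>k. (f^^(k*m)) x" UNIV] by auto
    then obtain a b where ab: "a \<noteq> b" "(f^^(a*m)) x = (f^^(b*m)) x" unfolding inj_def by auto
    show False
    proof (cases "a < b")
      case True
      then have "a*m < b*m" using p(2) by simp
      then show False using ev_per_finite[OF ab(2)] assms(5) by blast
    next
      case False
      then have "b*m < a*m" using p(2) ab(1) by simp
      then show False using ev_per_finite[OF ab(2)[symmetric]] assms(5) by blast
    qed
  qed
  have "scrambled_set f (e/2) S" unfolding scrambled_set_def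
  proof (intro ballI impI)
    fix u v assume u: "u \<in> S" and v: "v \<in> S" and uv: "u \<noteq> v"
    obtain a where a: "u = (f^^(a*m)) x" using u unfolding S_def by auto
    obtain b where b: "v = (f^^(b*m)) x" using v unfolding S_def by auto
    have "a \<noteq> b" using uv a b by auto
    then show "scrambled_pair f (e/2) u v"
    proof (cases "a < b")
      case True
      then show ?thesis unfolding a b by (rule scr_pair[OF assms(1-5) p y])
    next
      case False
      then have "b < a" using \<open>a \<noteq> b\<close> by simp
      then show ?thesis unfolding a b by (rule scr_sym[OF scr_pair[OF assms(1-5) p y]])
    qed
  qed
  then show ?thesis using SX infS y(2) by (intro exI[of _ "e/2"]) auto
qed

end
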